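(* Let $A\in\mathbb{R}^{n\times n}$ be such that $\Lambda_1$ is complex and use the Euclidean norm (with induced spectral matrix norm). For $y_0\in\mathbb{R}^n$ with $w^{(1)}y_0\neq0$, $$a_{\min}(V_1,W_1)\le\mathrm{OT}(t,y_0)\le a_{\max}(V_1,W_1)\qquad\text{for all }t\in\mathbb{R},$$ where $a_{\min}(V_1,W_1)=\sqrt{\frac{(1+W_1)(1-V_1)}{2(1+V_1)}}$ if $V_1\le W_1$, $a_{\min}(V_1,W_1)=\sqrt{\frac{1-W_1}{2}}$ if $V_1\ge W_1$, and $a_{\max}(V_1,W_1)=\sqrt{\frac{(1+W_1)(1+V_1)}{2(1-V_1)}}$. Moreover, if $\gamma_1(\hat y_0)-\theta_1$ is an odd multiple of $\pi/2$, then $\min_{t\in\mathbb{R}}\mathrm{OT}(t,y_0)=a_{\min}(V_1,W_1)$ and $\max_{t\in\mathbb{R}}\mathrm{OT}(t,y_0)=a_{\max}(V_1,W_1)$.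
   Context: $\Lambda_1$ complex: the eigenvalues of $A$ with maximal real part are exactly a pair of simple complex conjugate eigenvalues $\lambda_1,\overline{\lambda_1}$, $\omega_1=\operatorname{Im}\lambda_1>0$. $w^{(1)}$ (row), $v^{(1)}$ (column) left/right eigenvectors for $\lambda_1$; $\hat w^{(1)}=w^{(1)}/\|w^{(1)}\|_2$, $\hat v^{(1)}=v^{(1)}/\|v^{(1)}\|_2$. $V_1=|(\hat v^{(1)})^T\hat v^{(1)}|$, $W_1=|\hat w^{(1)}(\hat w^{(1)})^T|$ ($^T$ without conjugation), both in $[0,1)$. Polar forms $\hat v^{(1)}_k=|\hat v^{(1)}_k|e^{\sqrt{-1}\alpha_{1k}}$, $\hat w^{(1)}_l=|\hat w^{(1)}_l|e^{\sqrt{-1}\beta_{1l}}$, $\hat w^{(1)}u=|\hat w^{(1)}u|e^{\sqrt{-1}\gamma_1(u)}$ for real $u$ with $w^{(1)}u\neq0$. $\hat y_0=y_0/\|y_0\|_2$. $\hat\Theta_1(t,u)=(|\hat v^{(1)}_k|\cos(\omega_1t+\alpha_{1k}+\gamma_1(u)))_{k}$, $\hat\Theta_1(t)=(|\hat v^{(1)}_k||\hat w^{(1)}_l|\cos(\omega_1t+\alpha_{1k}+\beta_{1l}))_{k,l}$, $\mathrm{OT}(t,y_0)=\|\hat\Theta_1(t)\|_2/\|\hat\Theta_1(t,\hat y_0)\|_2$. Let $R_1=\begin{bmatrix}\operatorname{Re}\hat w^{(1)}\\ \operatorname{Im}\hat w^{(1)}\end{bmatrix}\in\mathbb{R}^{2\times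 n}$ with largest singular value $\sigma_1$ and corresponding left singular vector $\alpha^{(1)}\in\mathbb{R}^2$; identifying $\mathbb{R}^2$ with $\mathbb{C}$, $\theta_1$ is the angle between the positive real axis and the vector $\sigma_1\alpha^{(1)}$ (the major semi-axis of the ellipse $\{\hat w^{(1)}u: u\in\mathbb{R}^n,\|u\|_2=1\}$ boundary). *)

theory Defs
  imports "HOL-Analysis.Analysis" "HOL-Computational_Algebra.Polynomial"
begin

definition charpoly :: "real^'n^'n \<Rightarrow> complex poly" where
  "charpoly A = det (\<chi> i j. (if i = j then [:0, 1:] else 0) - [:complex_of_real (A$i$j):])"

definition is_eigenvalue :: "real^'n^'n \<Rightarrow> complex \<Rightarrow> bool" where
  "is_eigenvalue A \<mu> \<longleftrightarrow> poly (charpoly A) \<mu> = 0"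

definition simple_eigenvalue :: "real^'n^'n \<Rightarrow> complex \<Rightarrow> bool" where
  "simple_eigenvalue A \<mu> \<longleftrightarrow> is_eigenvalue A \<mu> \<and> order \<mu> (charpoly A) = 1"

definition cmat :: "real^'n^'m \<Rightarrow> complex^'n^'m" where
  "cmat A = (\<chi> i j. complex_of_real (A$i$j))"

text \<open>Lambda_1 complex: the eigenvalues of maximal real part are exactly the simple
  conjugate pair lambda1, cnj lambda1 with Im lambda1 > 0.\<close>
definition Lambda1_complex :: "real^'n^'n \<Rightarrow> complex \<Rightarrow> bool" where
  "Lambda1_complex A l1 \<longleftrightarrow>
     Im l1 > 0 \<and> simple_eigenvalue A l1 \<and> simple_eigenvalue A (cnj l1) \<and>
     (\<forall>\<mu>. is_eigenvalue A \<mu> \<longrightarrow> Re \<mu> \<le> Re l1) \<and>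
     (\<forall>\<mu>. is_eigenvalue A \<mu> \<and> Re \<mu> = Re l1 \<longrightarrow> \<mu> = l1 \<or> \<mu> = cnj l1)"

definition nrmz :: "'a::real_normed_vector \<Rightarrow> 'a" where
  "nrmz x = (1 / norm x) *\<^sub>R x"

definition rowmul :: "complex^'n \<Rightarrow> real^'n \<Rightarrow> complex" where
  "rowmul w u = (\<Sum>l\<in>UNIV. w$l * complex_of_real (u$l))"

definition tdot :: "complex^'n \<Rightarrow> complex" where
  "tdot x = (\<Sum>k\<in>UNIV. x$k * x$k)"

text \<open>Hat-Theta_1(t,u), with vh, wh the normalised eigenvectors and om = omega_1;
  the angles are the arguments of the polar forms.\<close>
definition Theta_vec :: "complex^'n \<Rightarrow> complex^'n \<Rightarrow> real \<Rightarrow> real \<Rightarrow> real^'n \<Rightarrow> real^'n" where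
  "Theta_vec vh wh om t u = (\<chi> k. norm (vh$k) * cos (om * t + Arg (vh$k) + Arg (rowmul wh u)))"

definition Theta_mat :: "complex^'n \<Rightarrow> complex^'n \<Rightarrow> real \<Rightarrow> real \<Rightarrow> real^'n^'n" where
  "Theta_mat vh wh om t = (\<chi> k l. norm (vh$k) * norm (wh$l) * cos (om * t + Arg (vh$k) + Arg (wh$l)))"

definition spec_norm :: "real^'n^'m \<Rightarrow> real" where
  "spec_norm M = onorm (\<lambda>x. M *v x)"

definition OT :: "complex^'n \<Rightarrow> complex^'n \<Rightarrow> real \<Rightarrow> real \<Rightarrow> real^'n \<Rightarrow> real" where
  "OT vh wh om t y0 = spec_norm (Theta_mat vh wh om t) / norm (Theta_vec vh wh om t (nrmz y0))"

definition a_min :: "real \<Rightarrow> real \<Rightarrow> real" where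
  "a_min V W = (if V \<le> W then sqrt ((1 + W) * (1 - V) / (2 * (1 + V))) else sqrt ((1 - W) / 2))"

definition a_max :: "real \<Rightarrow> real \<Rightarrow> real" where
  "a_max V W = sqrt ((1 + W) * (1 + V) / (2 * (1 - V)))"

definition R1mat :: "complex^'n \<Rightarrow> real^'n^2" where
  "R1mat wh = (\<chi> i j. if i = 1 then Re (wh$j) else Im (wh$j))"

text \<open>theta is the angle of sigma_1 alpha, where alpha is a left singular vector of R
  for its largest singular value sigma_1 (= spectral norm of R).\<close>
definition major_axis_angle :: "complex^'n \<Rightarrow> real \<Rightarrow> bool" where
  "major_axis_angle wh \<theta> \<longleftrightarrow>
     (let R = R1mat wh; \<sigma> = spec_norm R in
      \<exists>\<alpha>::real^2. norm \<alpha> = 1 \<and> (R ** transpose R) *v \<alpha> = (\<sigma>^2) *\<^sub>R \<alpha> \<and>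
        \<sigma> *\<^sub>R \<alpha> = (\<sigma> * cos \<theta>) *\<^sub>R axis 1 1 + (\<sigma> * sin \<theta>) *\<^sub>R axis 2 1)"

end

theory Submission
  imports Defs
begin


definition reV :: "complex \<Rightarrow> complex^'n \<Rightarrow> real^'n" where
  "reV z x = (\<chi> k. Re (z * x$k))"

lemma Re_sq: "(Re y)^2 = (cmod y ^2 + Re (y^2))/2"
proof -
  have "cmod y ^2 = Re y ^2 + Im y^2" by (rule cmod_power2)
  then show ?thesis by (simp add: power2_eq_square)
qed

lemma norm_sq_vec: "norm (x::'a::real_normed_vector^'n)^2 = (\<Sum>k\<in>UNIV. norm (x$k)^2)"
  by (simp add: norm_vec_def L2_set_def sum_nonneg)

lemma normRe: fixes x :: "complex^'n" shows "norm (reV z x)^2 = (cmod z ^2 * norm x ^2 + Re (z^2 * tdot x))/2"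
proof -
  have "norm (reV z x)^2 = (\<Sum>k\<in>UNIV. (Re (z * x$k))^2)"
    by (simp add: norm_sq_vec reV_def)
  also have "\<dots> = (\<Sum>k\<in>UNIV. (cmod z^2 * cmod (x$k)^2 + Re (z^2 * (x$k * x$k)))/2)"
  proof (rule sum.cong)
    fix k :: 'n
    have "(z*x$k)^2 = z^2*(x$k*x$k)" by (simp add: power2_eq_square)
    moreover have "cmod (z*x$k)^2 = cmod z^2 * cmod (x$k)^2" by (simp add: norm_mult power_mult_distrib)
    ultimately show "(Re (z * x$k))^2 = (cmod z^2 * cmod (x$k)^2 + Re (z^2 * (x$k * x$k)))/2"
      using Re_sq[of "z*x$k"] by simp
  qed simp
  also have "\<dots> = ((\<Sum>k\<in>UNIV. cmod z^2 * cmod (x$k)^2) + (\<Sum>k\<in>UNIV. Re (z^2 * (x$k * x$k))))/2"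
    by (simp only: add_divide_distrib sum.distrib sum_divide_distrib)
  also have "(\<Sum>k\<in>UNIV. cmod z^2 * cmod (x$k)^2) = cmod z ^2 * norm x ^2"
    by (simp add: norm_sq_vec sum_distrib_left)
  also have "(\<Sum>k\<in>UNIV. Re (z^2 * (x$k * x$k))) = Re (z^2 * tdot x)"
    by (simp only: tdot_def sum_distrib_left Re_sum)
  finally show ?thesis .
qed

lemma rcis_Arg': "rcis (cmod z) (Arg z) = z"
  using rcis_cmod_Arg by blast

lemma Re_rowmul: "Re (z * rowmul w u) = inner (reV z w) u"
  unfolding rowmul_def reV_def inner_vec_def sum_distrib_left Re_sum
  by (intro sum.cong) (simp_all add: algebra_simps)



lemma cis_pow2: "(cis x)^2 = cis (2*x)"
  by (metis cis_mult power2_eq_square mult_2)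

lemma hRe: "complex_of_real (Re y) = (y + cnj y)/2"
  by (simp add: complex_eq_iff)

lemma cos_Arg_Re: "norm a * cos (x + Arg a) = Re (cis x * a)"
proof -
  have "cis x * a = rcis 1 x * rcis (norm a) (Arg a)" by (simp add: rcis_cmod_Arg cis_rcis_eq)
  also have "\<dots> = rcis (norm a) (x + Arg a)" by (simp add: rcis_mult)
  finally show ?thesis by simp
qed

lemma cos_Arg_Re2: "norm a * norm b * cos (x + Arg a + Arg b) = Re (cis x * a * b)"
proof -
  have "cis x * a * b = rcis 1 x * rcis (norm a) (Arg a) * rcis (norm b) (Arg b)"
    by (simp add: rcis_cmod_Arg cis_rcis_eq)
  also have "\<dots> = rcis (norm a * norm b) (x + Arg a + Arg b)" by (simp add: rcis_mult)
  finally show ?thesis by simp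
qed

lemma Theta_mat_mv: "Theta_mat vh wh om t *v u = reV (cis (om*t) * rowmul wh u) vh"
proof (subst vec_eq_iff, intro allI)
  fix k
  have "(Theta_mat vh wh om t *v u)$k = (\<Sum>l\<in>UNIV. Re (cis (om*t) * vh$k * wh$l * of_real (u$l)))"
    unfolding Theta_mat_def matrix_vector_mult_def by (simp add: cos_Arg_Re2)
  also have "\<dots> = Re (\<Sum>l\<in>UNIV. cis (om*t) * vh$k * wh$l * of_real (u$l))"
    by (simp add: Re_sum)
  also have "(\<Sum>l\<in>UNIV. cis (om*t) * vh$k * wh$l * of_real (u$l)) = cis (om*t) * rowmul wh u * vh$k"
    by (simp add: rowmul_def sum_distrib_left sum_distrib_right mult_ac)
  finally show "(Theta_mat vh wh om t *v u)$k = reV (cis (om*t) * rowmul wh u) vh $ k"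
    by (simp add: reV_def)
qed

lemma Theta_vec_eq: "Theta_vec vh wh om t u = reV (cis (om*t + Arg (rowmul wh u))) vh"
proof (subst vec_eq_iff, intro allI)
  fix k
  have "om * t + Arg (vh $ k) + Arg (rowmul wh u) = (om*t + Arg (rowmul wh u)) + Arg (vh$k)" by simp
  then show "Theta_vec vh wh om t u $ k = reV (cis (om*t + Arg (rowmul wh u))) vh $ k"
    unfolding Theta_vec_def reV_def by (simp only: vec_lambda_beta cos_Arg_Re)
qed

lemma norm_nrmz: "x \<noteq> 0 \<Longrightarrow> norm (nrmz x) = 1"
  by (simp add: nrmz_def)

lemma cis_sq: "(cis x * c)^2 = cis (2*x) * c^2"
  by (simp add: power_mult_distrib cis_pow2)

lemma norm_Theta_mat:
  assumes "norm vh = 1"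
  shows "norm (Theta_mat vh wh om t *v u)^2
     = (cmod (rowmul wh u)^2 + Re (cis (2*(om*t)) * (rowmul wh u)^2 * tdot vh))/2"
  unfolding Theta_mat_mv normRe using assms by (simp add: cis_sq norm_mult mult.assoc)

lemma norm_Theta_vec:
  assumes "norm vh = 1"
  shows "norm (Theta_vec vh wh om t u)^2
     = (1 + Re (cis (2*(om*t + Arg (rowmul wh u))) * tdot vh))/2"
  unfolding Theta_vec_eq normRe using assms by (simp add: cis_pow2)

lemma Re_unit_bound:
  assumes "cmod z = 1"
  shows "- cmod a \<le> Re (z * a) \<and> Re (z * a) \<le> cmod a"
proof -
  have "\<bar>Re (z*a)\<bar> \<le> cmod (z*a)" by (rule abs_Re_le_cmod)
  then show ?thesis using assms by (simp add: norm_mult abs_le_iff)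
qed

text \<open>W1: the ellipse is inside the disc of radius sigma1.\<close>
lemma rowmul_bound:
  fixes x :: "complex^'n"
  assumes "norm x = 1"
  shows "cmod (rowmul x u)^2 \<le> (1 + cmod (tdot x))/2 * norm u^2"
proof (cases "rowmul x u = 0")
  case True then show ?thesis by (simp add: add_nonneg_nonneg)
next
  case False
  define c where "c = rowmul x u"
  define e where "e = cnj c / of_real (cmod c)"
  have ce: "cmod e = 1" using False by (simp add: e_def c_def norm_divide)
  have "e * c = of_real (cmod c)"
    using False unfolding e_def c_def
    by (simp add: complex_norm_square[symmetric] power2_eq_square field_simps)
  then have "cmod c = inner (reV e x) u" using Re_rowmul[of e x u] by (simp add: c_def)
  also have "\<dots> \<le> norm (reV e x) * norm u" by (rule norm_cauchy_schwarz)
  finally have "cmod c ^2 \<le> (norm (reV e x) * norm u)^2"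
    by (simp add: power_mono)
  also have "\<dots> = (1 + Re (e^2 * tdot x))/2 * norm u^2"
    using assms ce by (simp add: power_mult_distrib normRe)
  also have "\<dots> \<le> (1 + cmod (tdot x))/2 * norm u^2"
  proof -
    have "cmod (e^2) = 1" using ce by (simp add: norm_power)
    then have "Re (e^2 * tdot x) \<le> cmod (tdot x)" using Re_unit_bound by blast
    then show ?thesis by (intro mult_right_mono) auto
  qed
  finally show ?thesis by (simp add: c_def)
qed



definition vcnj :: "complex^'n \<Rightarrow> complex^'n" where
  "vcnj x = (\<chi> k. cnj (x$k))"

lemma norm_vcnj [simp]: "norm (vcnj x) = norm x"
  by (simp add: norm_vec_def vcnj_def)

lemma tdot_vcnj [simp]: "tdot (vcnj x) = cnj (tdot x)"
  by (simp add: tdot_def vcnj_def)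

lemma rowmul_ug:
  fixes x :: "complex^'n"
  shows "rowmul x (reV g (vcnj x)) = (g * of_real (norm x^2) + cnj g * tdot x)/2"
proof -
  have "rowmul x (reV g (vcnj x)) = (\<Sum>l\<in>UNIV. (g * (x$l * cnj (x$l)) + cnj g * (x$l * x$l))/2)"
    unfolding rowmul_def reV_def vcnj_def
  proof (rule sum.cong)
    fix l
    have e1: "x $ l * complex_of_real ((\<chi> k. Re (g * (\<chi> k. cnj (x $ k)) $ k)) $ l)
        = x$l * of_real (Re (g * cnj (x$l)))" by (simp only: vec_lambda_beta)
    have e2: "complex_of_real (Re (g * cnj (x$l))) = (g * cnj (x$l) + cnj g * x$l)/2"
      using hRe[of "g * cnj (x$l)"] by simp
    show "x $ l * complex_of_real ((\<chi> k. Re (g * (\<chi> k. cnj (x $ k)) $ k)) $ l) =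
         (g * (x $ l * cnj (x $ l)) + cnj g * (x $ l * x $ l)) / 2"
      unfolding e1 e2 by (simp add: field_simps)
  qed simp
  also have "\<dots> = (g * (\<Sum>l\<in>UNIV. x$l * cnj (x$l)) + cnj g * tdot x)/2"
    by (simp only: tdot_def add_divide_distrib sum.distrib sum_divide_distrib sum_distrib_left)
  also have "(\<Sum>l\<in>UNIV. x$l * cnj (x$l)) = of_real (norm x^2)"
    unfolding norm_sq_vec of_real_sum complex_norm_square by simp
  finally show ?thesis .
qed

lemma norm_ug:
  fixes x :: "complex^'n"
  shows "norm (reV g (vcnj x))^2 = (cmod g^2 * norm x^2 + Re (g^2 * cnj (tdot x)))/2"
  by (simp add: normRe)

lemma inner_ug:
  fixes x :: "complex^'n"
  shows "inner (reV g (vcnj x)) u = Re (g * cnj (rowmul x u))"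
proof -
  have "cnj (rowmul x u) = rowmul (vcnj x) u"
    by (simp add: rowmul_def vcnj_def)
  then show ?thesis by (simp only: Re_rowmul)
qed

text \<open>W2: the point of the ellipse on the major axis.\<close>
lemma major_point:
  fixes x :: "complex^'n"
  assumes "norm x = 1" "cmod g = 1" "cnj g ^2 * tdot x = of_real (cmod (tdot x))"
  shows "rowmul x (reV g (vcnj x)) = g * of_real ((1 + cmod (tdot x))/2)"
    and "norm (reV g (vcnj x))^2 = (1 + cmod (tdot x))/2"
proof -
  have gg: "g * cnj g = 1" using assms(2) complex_norm_square[of g] by simp
  have "g * (cnj g ^2 * tdot x) = (g * cnj g) * (cnj g * tdot x)" by (simp add: power2_eq_square mult_ac)
  then have "g * (cnj g ^2 * tdot x) = cnj g * tdot x" by (simp only: gg mult_1)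
  then have "cnj g * tdot x = g * (cnj g ^2 * tdot x)" by (rule sym)
  then have h: "cnj g * tdot x = g * of_real (cmod (tdot x))" by (simp only: assms(3))
  have "rowmul x (reV g (vcnj x)) = (g * of_real (norm x^2) + cnj g * tdot x)/2" by (rule rowmul_ug)
  also have "\<dots> = (g + g * of_real (cmod (tdot x)))/2" unfolding h assms(1) by simp
  also have "\<dots> = g * of_real ((1 + cmod (tdot x))/2)" by (simp add: field_simps)
  finally show "rowmul x (reV g (vcnj x)) = g * of_real ((1 + cmod (tdot x))/2)" .
  have "g^2 * cnj (tdot x) = cnj (cnj g ^2 * tdot x)" by simp
  then have "g^2 * cnj (tdot x) = of_real (cmod (tdot x))" using assms(3) by simp
  then show "norm (reV g (vcnj x))^2 = (1 + cmod (tdot x))/2"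
    using assms by (simp add: norm_ug)
qed

lemma exists_major_g:
  "\<exists>g. cmod g = 1 \<and> cnj g ^2 * t = of_real (cmod t)"
proof -
  define g where "g = cis (Arg t / 2)"
  have "cnj g ^2 = cis (- Arg t)" by (simp add: g_def cis_cnj cis_pow2)
  moreover have "t = rcis (cmod t) (Arg t)" by (simp add: rcis_cmod_Arg)
  ultimately have "cnj g ^2 * t = cis (- Arg t) * rcis (cmod t) (Arg t)" by simp
  also have "\<dots> = of_real (cmod t)" by (simp add: rcis_def cis_mult)
  finally have "cnj g ^2 * t = of_real (cmod t)" .
  moreover have "cmod g = 1" by (simp add: g_def)
  ultimately show ?thesis by blast
qed



lemma dir_point:
  fixes x :: "complex^'n"
  assumes "norm x = 1" "cmod (tdot x) < 1" "cmod e = 1"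
  shows "\<exists>u. u \<noteq> 0 \<and> rowmul x u = e \<and> norm u^2 \<le> 2 / (1 - cmod (tdot x))"
proof -
  define T where "T = tdot x"
  define W where "W = cmod T"
  have W1: "W < 1" "0 \<le> W" using assms by (auto simp: W_def T_def)
  have den: "1 - W^2 > 0" using W1 by (simp add: power_less_one_iff abs_square_less_1)
  define kk where "kk = 2 / (1 - W^2)"
  define K where "K = complex_of_real kk"
  define g where "g = (e - T * cnj e) * K"
  define u where "u = reV g (vcnj x)"
  have ee: "e * cnj e = 1" using assms(3) complex_norm_square[of e] by simp
  have TT: "T * cnj T = of_real (W^2)" using complex_norm_square[of T] by (simp add: W_def)
  have ru0: "rowmul x u = (g + cnj g * T)/2"
    using assms(1) by (simp add: u_def rowmul_ug T_def)
  have cg: "cnj g = (cnj e - cnj T * e) * K" unfolding g_def K_def by (simp add: algebra_simps)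
  have "g + cnj g * T = e * (1 - T * cnj T) * K" unfolding cg by (simp add: g_def algebra_simps)
  also have "\<dots> = e * (of_real (1 - W^2) * K)" using TT by simp
  also have "of_real (1 - W^2) * K = 2"
  proof -
    have "(1-W^2)*kk = 2" using den by (simp add: kk_def field_simps)
    then show ?thesis by (simp only: K_def of_real_mult[symmetric]) simp
  qed
  finally have ru: "rowmul x u = e"
    using ru0 by simp
  have "norm u^2 = inner u u" by (simp add: power2_norm_eq_inner)
  also have "\<dots> = Re (g * cnj (rowmul x u))" unfolding u_def by (rule inner_ug)
  also have "\<dots> = Re (g * cnj e)" by (simp only: ru)
  also have gce: "g * cnj e = (1 - T * cnj e ^2) * K"
  proof -
    have "g * cnj e = (e * cnj e - T * cnj e ^2) * K"
      by (simp add: g_def algebra_simps power2_eq_square)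
    then show ?thesis using ee by simp
  qed
  also have "Re ((1 - T * cnj e ^2) * K) = (1 - Re (T * cnj e ^2)) * (2 / (1 - W^2))"
    by (simp add: K_def kk_def)
  also have "\<dots> \<le> (1 + W) * (2 / (1 - W^2))"
  proof -
    have "cmod (cnj e ^2) = 1" using assms(3) by (simp add: norm_power)
    then have "- W \<le> Re (cnj e ^2 * T)" using Re_unit_bound W_def by blast
    then show ?thesis using den by (intro mult_right_mono) (auto simp: mult.commute)
  qed
  also have "\<dots> = 2 / (1 - W)"
    using W1 den by (simp add: field_simps power2_eq_square)
  finally have "norm u^2 \<le> 2 / (1 - W)" .
  moreover have "u \<noteq> 0" using ru assms(3) by (auto simp: rowmul_def)
  ultimately show ?thesis using ru by (auto simp: W_def T_def)
qed



lemma cmat_scaleR: "cmat M *v (r *\<^sub>R x) = r *\<^sub>R (cmat M *v x)"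
  by (simp add: vec_eq_iff matrix_vector_mult_def scaleR_sum_right)

lemma scaleR_smult: "r *\<^sub>R (l *s x) = l *s (r *\<^sub>R (x::complex^'n))"
  by (simp add: vec_eq_iff)

lemma nrmz_eig: "cmat M *v x = l *s x \<Longrightarrow> cmat M *v nrmz x = l *s nrmz x"
  unfolding nrmz_def by (simp add: cmat_scaleR scaleR_smult)

lemma left_eig:
  assumes "w v* cmat A = l *s w"
  shows "cmat (transpose A) *v w = l *s w"
proof -
  have "cmat (transpose A) *v w = w v* cmat A"
    by (simp add: vec_eq_iff vector_matrix_mult_def matrix_vector_mult_def cmat_def transpose_def mult.commute)
  then show ?thesis using assms by simp
qed

lemma tdot_le1:
  fixes y :: "complex^'n"
  shows "cmod (tdot y) \<le> norm y ^2"
proof -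
  have "cmod (tdot y) \<le> (\<Sum>k\<in>UNIV. cmod (y$k * y$k))" unfolding tdot_def by (rule norm_sum)
  also have "\<dots> = (\<Sum>k\<in>UNIV. cmod (y$k)^2)" by (simp add: norm_mult power2_eq_square)
  also have "\<dots> = norm y ^2" by (simp add: norm_sq_vec)
  finally show ?thesis .
qed

lemma tdot_lt1:
  fixes M :: "real^'n^'n" and y :: "complex^'n"
  assumes ny: "norm y = 1" and ev: "cmat M *v y = l *s y" and il: "Im l \<noteq> 0"
  shows "cmod (tdot y) < 1"
proof (rule ccontr)
  assume "\<not> cmod (tdot y) < 1"
  moreover have "cmod (tdot y) \<le> 1" using tdot_le1[of y] ny by simp
  ultimately have t1: "cmod (tdot y) = 1" by simp
  define d where "d = Arg (tdot y)"
  have td: "tdot y = cis d" using rcis_cmod_Arg[of "tdot y"] t1 by (simp add: d_def rcis_def)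
  define c where "c = cis (- d/2)"
  define z where "z = c *s y"
  have "norm z ^2 = (\<Sum>k\<in>UNIV. cmod (z$k)^2)" by (rule norm_sq_vec)
  also have "\<dots> = (\<Sum>k\<in>UNIV. cmod (y$k)^2)" by (simp add: z_def c_def norm_mult)
  also have "\<dots> = norm y ^2" by (rule norm_sq_vec[symmetric])
  finally have nz: "norm z ^2 = 1" using ny by simp
  have "tdot z = c^2 * tdot y"
    unfolding tdot_def z_def by (simp add: sum_distrib_left power2_eq_square mult_ac)
  also have "\<dots> = 1" by (simp add: c_def cis_pow2 td cis_mult)
  finally have tz: "tdot z = 1" .
  have "norm (reV (-\<i>) z)^2 = 0"
    by (simp add: normRe nz tz)
  then have "reV (-\<i>) z = 0" by simp
  then have imz: "\<And>k. Im (z$k) = 0" by (simp add: vec_eq_iff reV_def)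
  have "z \<noteq> 0" using nz by auto
  then obtain k where zk: "z$k \<noteq> 0" by (auto simp: vec_eq_iff)
  have "cmat M *v z = c *s (cmat M *v y)" unfolding z_def
    by (simp add: vec_eq_iff matrix_vector_mult_def sum_distrib_left mult_ac)
  then have evz: "cmat M *v z = l *s z" using ev by (simp add: z_def vec_eq_iff mult_ac)
  have "Im ((cmat M *v z)$k) = 0"
    using imz by (simp add: cmat_def matrix_vector_mult_def Im_sum)
  moreover have "Im ((l *s z)$k) = Im l * Re (z$k)" using imz by simp
  moreover have "Re (z$k) \<noteq> 0" using zk imz by (simp add: complex_eq_iff)
  ultimately show False using evz il by simp
qed

lemma two_ne_one: "(2::2) \<noteq> 1"
  by simp

lemma R1_mv: "(R1mat wh *v x)$1 = Re (rowmul wh x)" "(R1mat wh *v x)$2 = Im (rowmul wh x)"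
  by (simp_all add: R1mat_def matrix_vector_mult_def rowmul_def Re_sum Im_sum)

lemma norm_R1_mv: "norm (R1mat wh *v x) = cmod (rowmul wh x)"
  by (simp add: norm_vec_def L2_set_def sum_2 R1_mv cmod_def)

lemma le_sqrt_mult:
  fixes a b K :: real
  assumes "a^2 \<le> K * b^2" "0 \<le> b"
  shows "a \<le> sqrt K * b"
proof -
  have "a \<le> sqrt (a^2)" by simp
  also have "\<dots> \<le> sqrt (K * b^2)" using assms(1) by (rule real_sqrt_le_mono)
  also have "\<dots> = sqrt K * b" using assms(2) by (simp add: real_sqrt_mult)
  finally show ?thesis .
qed

lemma spec_norm_R1:
  fixes wh :: "complex^'n"
  assumes nw: "norm wh = 1"
  shows "spec_norm (R1mat wh) = sqrt ((1 + cmod (tdot wh))/2)"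
proof (rule antisym)
  show "spec_norm (R1mat wh) \<le> sqrt ((1 + cmod (tdot wh))/2)"
    unfolding spec_norm_def
  proof (rule onorm_le)
    fix x
    show "norm (R1mat wh *v x) \<le> sqrt ((1 + cmod (tdot wh))/2) * norm x"
      unfolding norm_R1_mv by (rule le_sqrt_mult[OF rowmul_bound[OF nw]]) simp
  qed
next
  obtain g where g: "cmod g = 1" "cnj g ^2 * tdot wh = of_real (cmod (tdot wh))"
    using exists_major_g by blast
  define u where "u = reV g (vcnj wh)"
  define K where "K = (1 + cmod (tdot wh))/2"
  have Kp: "K > 0" by (simp add: K_def add_pos_nonneg)
  have "rowmul wh u = g * of_real K"
    unfolding u_def K_def by (rule major_point(1)[OF nw g])
  then have "cmod (rowmul wh u) = cmod g * \<bar>K\<bar>" by (simp add: norm_mult)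
  then have ru: "cmod (rowmul wh u) = K" using g(1) Kp by simp
  have nu: "norm u = sqrt K"
    using major_point(2)[OF nw g] by (simp add: u_def K_def real_sqrt_unique)
  have "norm (R1mat wh *v u) / norm u \<le> spec_norm (R1mat wh)"
    unfolding spec_norm_def by (rule le_onorm) simp
  moreover have "norm (R1mat wh *v u) / norm u = sqrt K"
    unfolding norm_R1_mv ru nu using Kp by (simp add: real_div_sqrt)
  ultimately show "sqrt ((1 + cmod (tdot wh))/2) \<le> spec_norm (R1mat wh)" by (simp add: K_def)
qed

lemma reV_add: "reV (a + b) x = reV a x + reV b x"
  by (simp add: reV_def vec_eq_iff algebra_simps)

lemma major_axis_tau:
  fixes wh :: "complex^'n"
  assumes nw: "norm wh = 1" and ma: "major_axis_angle wh th"
  shows "cnj (cis th)^2 * tdot wh = of_real (cmod (tdot wh))"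
proof -
  define W where "W = cmod (tdot wh)"
  define A' where "A' = Re (tdot wh)"
  define B' where "B' = Im (tdot wh)"
  define R where "R = R1mat wh"
  define sg where "sg = spec_norm R"
  have sg: "sg = sqrt ((1+W)/2)" using spec_norm_R1[OF nw] by (simp add: sg_def R_def W_def)
  have Wn: "0 \<le> W" by (simp add: W_def)
  then have sgpos: "sg > 0" by (simp add: sg add_pos_nonneg)
  have sg2: "sg^2 = (1+W)/2" using Wn by (simp add: sg add_nonneg_nonneg)
  from ma obtain al :: "real^2" where al: "(R ** transpose R) *v al = (sg^2) *\<^sub>R al"
      and alc: "sg *\<^sub>R al = (sg * cos th) *\<^sub>R axis 1 1 + (sg * sin th) *\<^sub>R axis 2 1"
    unfolding major_axis_angle_def Let_def R_def sg_def by blast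
  have a1: "al$1 = cos th" using arg_cong[OF alc, of "\<lambda>v. v$1"] sgpos by (simp add: axis_def)
  have a2: "al$2 = sin th" using arg_cong[OF alc, of "\<lambda>v. v$2"] sgpos by (simp add: axis_def)
  define rr where "rr = reV 1 wh"
  define ss where "ss = reV (-\<i>) wh"
  have Rr: "R$1 = rr" "R$2 = ss" by (simp_all add: R_def R1mat_def rr_def ss_def reV_def vec_eq_iff)
  have ent: "\<And>i j. (R ** transpose R) $ i $ j = inner (R$i) (R$j)"
    by (simp add: matrix_matrix_mult_def transpose_def inner_vec_def)
  have e1: "inner rr rr * cos th + inner rr ss * sin th = sg^2 * cos th"
    using arg_cong[OF al, of "\<lambda>v. v$1"] by (simp add: matrix_vector_mult_def sum_2 ent Rr a1 a2)
  have e2: "inner ss rr * cos th + inner ss ss * sin th = sg^2 * sin th"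
    using arg_cong[OF al, of "\<lambda>v. v$2"] by (simp add: matrix_vector_mult_def sum_2 ent Rr a1 a2)
  have nrr: "inner rr rr = (1 + A')/2"
    using normRe[of 1 wh] nw by (simp add: rr_def A'_def power2_norm_eq_inner)
  have nss: "inner ss ss = (1 - A')/2"
    using normRe[of "-\<i>" wh] nw by (simp add: ss_def A'_def power2_norm_eq_inner)
  have "norm (rr + ss)^2 = (2 + Re ((1 - \<i>)^2 * tdot wh))/2"
    using normRe[of "1 - \<i>" wh] nw by (simp add: rr_def ss_def reV_add[symmetric] cmod_def)
  also have "\<dots> = 1 + B'" by (simp add: B'_def power2_eq_square algebra_simps)
  finally have "inner (rr + ss) (rr + ss) = 1 + B'" by (simp add: power2_norm_eq_inner)
  moreover have "inner (rr+ss) (rr+ss) = inner rr rr + 2 * inner rr ss + inner ss ss"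
    by (simp add: inner_add_left inner_add_right inner_commute[of ss rr])
  ultimately have "1 + B' = (1 + A')/2 + 2 * inner rr ss + (1 - A')/2" using nrr nss by simp
  then have nrs: "inner rr ss = B'/2" by (simp add: field_simps)
  have E1: "A' * cos th + B' * sin th = W * cos th"
    using e1 nrr nrs sg2 by (simp add: algebra_simps divide_simps) 
  have E2: "B' * cos th - A' * sin th = W * sin th"
    using e2 nss nrs sg2 by (simp add: inner_commute[of ss rr] algebra_simps divide_simps)
  have sc: "(sin th)^2 + (cos th)^2 = 1" by simp
  have "Re (cnj (cis th)^2 * tdot wh) = cos (2*th) * A' + sin (2*th) * B'"
    by (simp add: cis_cnj cis_pow2 A'_def B'_def)
  also have "\<dots> = cos th * (A' * cos th + B' * sin th) + sin th * (B' * cos th - A' * sin th)"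
    unfolding cos_double[of th] sin_double[of th] by (simp add: algebra_simps power2_eq_square)
  also have "\<dots> = W * ((sin th)^2 + (cos th)^2)" unfolding E1 E2 by algebra
  also have "\<dots> = W" by simp
  finally have re: "Re (cnj (cis th)^2 * tdot wh) = W" .
  have "Im (cnj (cis th)^2 * tdot wh) = cos (2*th) * B' - sin (2*th) * A'"
    by (simp add: cis_cnj cis_pow2 A'_def B'_def)
  also have "\<dots> = cos th * (B' * cos th - A' * sin th) - sin th * (A' * cos th + B' * sin th)"
    unfolding cos_double[of th] sin_double[of th] by algebra
  also have "\<dots> = 0" unfolding E1 E2 by (simp add: algebra_simps)
  finally have im: "Im (cnj (cis th)^2 * tdot wh) = 0" .
  show ?thesis using re im by (simp add: complex_eq_iff W_def)
qed

lemma bessel2: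
  fixes r s u :: "'a::real_inner"
  assumes rs: "inner r s = 0" and rr: "inner r r = p" and ss: "inner s s = q" and pq: "p > 0" "q > 0"
  shows "q * (inner r u)^2 + p * (inner s u)^2 \<le> p * q * norm u^2"
proof -
  define X where "X = inner r u"
  define Y where "Y = inner s u"
  define z where "z = (p*q) *\<^sub>R u - (q * X) *\<^sub>R r - (p * Y) *\<^sub>R s"
  have sr: "inner s r = 0" using rs by (simp add: inner_commute)
  have ur: "inner u r = X" "inner u s = Y" by (simp_all add: X_def Y_def inner_commute)
  have uu: "inner u u = norm u^2" by (simp add: power2_norm_eq_inner)
  have "inner z z = (p*q)*(p*q) * inner u u - 2*(p*q)*(q*X) * X - 2*(p*q)*(p*Y)*Y
      + (q*X)*(q*X)*p + (p*Y)*(p*Y)*q"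
    unfolding z_def
    by (simp add: inner_diff_left inner_diff_right rs sr rr ss ur X_def[symmetric] Y_def[symmetric] algebra_simps)
  also have "\<dots> = (p*q) * (p*q*norm u^2 - q*X^2 - p*Y^2)"
    unfolding uu by (simp add: algebra_simps power2_eq_square)
  finally have "0 \<le> (p*q) * (p*q*norm u^2 - q*X^2 - p*Y^2)" by (metis inner_ge_zero)
  moreover have pq0: "p*q > 0" using pq by simp
  ultimately have "0 \<le> p*q*norm u^2 - q*X^2 - p*Y^2"
    using mult_le_cancel_left_pos[OF pq0, of 0 "p*q*norm u^2 - q*X^2 - p*Y^2"] by simp
  then show ?thesis by (simp add: X_def Y_def)
qed



lemma ellipse_bound:
  fixes x :: "complex^'n"
  assumes nx: "norm x = 1" and tau: "cnj (cis th)^2 * tdot x = of_real (cmod (tdot x))"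
    and W1: "cmod (tdot x) < 1" and V: "0 \<le> V" "V < 1"
  shows "(1-V) * (Re (cis (-th) * rowmul x u))^2 + (1+V) * (Im (cis (-th) * rowmul x u))^2
     \<le> max ((1-V)*(1 + cmod (tdot x))/2) ((1+V)*(1 - cmod (tdot x))/2) * norm u^2"
proof -
  define W where "W = cmod (tdot x)"
  define c where "c = cis (-th)"
  define r' where "r' = reV c x"
  define s' where "s' = reV (-\<i> * c) x"
  define X where "X = Re (c * rowmul x u)"
  define Y where "Y = Im (c * rowmul x u)"
  define p where "p = (1+W)/2"
  define q where "q = (1-W)/2"
  have pq: "p > 0" "q > 0" using W1 by (simp_all add: p_def q_def W_def add_pos_nonneg)
  have c2: "c^2 * tdot x = of_real W" using tau by (simp add: cis_cnj W_def c_def)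
  have cm: "cmod c = 1" by (simp add: c_def)
  have hX: "X = inner r' u" unfolding X_def r'_def by (rule Re_rowmul)
  have hY: "Y = inner s' u"
  proof -
    have "Im (c * rowmul x u) = Re ((-\<i> * c) * rowmul x u)" by simp
    then show ?thesis unfolding Y_def s'_def by (simp only: Re_rowmul)
  qed
  have "norm r'^2 = (cmod c ^2 * norm x ^2 + Re (c^2 * tdot x))/2" unfolding r'_def by (rule normRe)
  also have "\<dots> = p" unfolding c2 cm nx by (simp add: p_def)
  finally have nr: "inner r' r' = p" by (simp add: power2_norm_eq_inner)
  have "norm s'^2 = (cmod (-\<i> * c) ^2 * norm x ^2 + Re ((-\<i> * c)^2 * tdot x))/2"
    unfolding s'_def by (rule normRe)
  also have "(-\<i> * c)^2 * tdot x = - (c^2 * tdot x)" by (simp add: power_mult_distrib)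
  also have "cmod (-\<i> * c) = 1" using cm by (simp add: norm_mult)
  finally have nsq: "norm s'^2 = q" unfolding c2 nx by (simp add: q_def)
  then have ns: "inner s' s' = q" by (simp add: power2_norm_eq_inner)
  have rs_sum: "r' + s' = reV ((1 - \<i>) * c) x"
    unfolding r'_def s'_def reV_add[symmetric] by (simp add: algebra_simps)
  have "norm (r' + s')^2 = (cmod ((1 - \<i>) * c) ^2 * norm x ^2 + Re (((1 - \<i>) * c)^2 * tdot x))/2"
    unfolding rs_sum by (rule normRe)
  also have "((1 - \<i>) * c)^2 * tdot x = (1 - \<i>)^2 * (c^2 * tdot x)" by (simp add: power_mult_distrib)
  also have "cmod ((1 - \<i>) * c) ^2 = 2"
  proof -
    have n1i: "cmod (1 - \<i>) = sqrt 2" by (simp add: cmod_def)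
    show ?thesis unfolding norm_mult cm n1i by simp
  qed
  finally have "norm (r' + s')^2 = 1" unfolding c2 nx by (simp add: power2_eq_square algebra_simps)
  then have "inner (r' + s') (r' + s') = 1" by (simp add: power2_norm_eq_inner)
  moreover have "inner (r'+s') (r'+s') = inner r' r' + 2 * inner r' s' + inner s' s'"
    by (simp add: inner_add_left inner_add_right inner_commute[of s' r'])
  ultimately have rs: "inner r' s' = 0" using nr ns p_def q_def by argo
  have bes: "q * X^2 + p * Y^2 \<le> p * q * norm u^2"
    unfolding hX hY by (rule bessel2[OF rs nr ns pq])
  define M where "M = max ((1-V)*p) ((1+V)*q)"
  have M0: "0 \<le> M" using V pq by (simp add: M_def le_max_iff_disj)
  have b2: "X^2/p + Y^2/q \<le> norm u^2"
  proof -
    have "X^2/p + Y^2/q = (q * X^2 + p * Y^2) / (p*q)" using pq by (simp add: field_simps)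
    also have "\<dots> \<le> (p * q * norm u^2) / (p*q)" by (rule divide_right_mono[OF bes]) (use pq in simp)
    also have "\<dots> = norm u^2" using pq by simp
    finally show ?thesis .
  qed
  have "(1-V) * X^2 + (1+V) * Y^2 = ((1-V)*p) * (X^2/p) + ((1+V)*q) * (Y^2/q)"
    using pq by (simp add: field_simps)
  also have "\<dots> \<le> M * (X^2/p) + M * (Y^2/q)"
    using pq by (intro add_mono mult_right_mono) (auto simp: M_def)
  also have "\<dots> = M * (X^2/p + Y^2/q)" by (simp add: algebra_simps)
  also have "\<dots> \<le> M * norm u^2" using b2 M0 by (rule mult_left_mono)
  finally show ?thesis
    by (simp add: X_def Y_def c_def M_def p_def q_def W_def mult.assoc)
qed

lemma F_upper:
  assumes "norm vh = 1" "norm wh = 1"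
  shows "norm (Theta_mat vh wh om t *v u)^2 \<le> (1 + cmod (tdot wh))*(1 + cmod (tdot vh))/4 * norm u^2"
proof -
  define c where "c = rowmul wh u"
  have "Re (cis (2*(om*t)) * c^2 * tdot vh) \<le> cmod (cis (2*(om*t)) * c^2 * tdot vh)"
    by (rule complex_Re_le_cmod)
  also have "\<dots> = cmod c ^2 * cmod (tdot vh)" by (simp add: norm_mult norm_power)
  finally have h: "Re (cis (2*(om*t)) * c^2 * tdot vh) \<le> cmod c ^2 * cmod (tdot vh)" .
  have "norm (Theta_mat vh wh om t *v u)^2 = (cmod c^2 + Re (cis (2*(om*t)) * c^2 * tdot vh))/2"
    unfolding c_def by (rule norm_Theta_mat[OF assms(1)])
  also have "\<dots> \<le> cmod c^2 * ((1 + cmod (tdot vh))/2)" using h by (simp add: algebra_simps)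
  also have "\<dots> \<le> ((1 + cmod (tdot wh))/2 * norm u^2) * ((1 + cmod (tdot vh))/2)"
  proof (rule mult_right_mono)
    show "cmod c^2 \<le> (1 + cmod (tdot wh))/2 * norm u^2" unfolding c_def by (rule rowmul_bound[OF assms(2)])
    show "0 \<le> (1 + cmod (tdot vh))/2" by (simp add: add_nonneg_nonneg)
  qed
  also have "\<dots> = (1 + cmod (tdot wh))*(1 + cmod (tdot vh))/4 * norm u^2" by (simp add: field_simps)
  finally show ?thesis .
qed

lemma N_upper:
  assumes "norm vh = 1" "norm wh = 1"
  shows "spec_norm (Theta_mat vh wh om t) \<le> sqrt ((1 + cmod (tdot wh))*(1 + cmod (tdot vh))/4)"
  unfolding spec_norm_def
proof (rule onorm_le)
  fix u
  show "norm (Theta_mat vh wh om t *v u) \<le> sqrt ((1 + cmod (tdot wh))*(1 + cmod (tdot vh))/4) * norm u"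
    by (rule le_sqrt_mult[OF F_upper[OF assms]]) simp
qed

lemma N_ge:
  assumes "u \<noteq> 0"
  shows "norm (Theta_mat vh wh om t *v u)^2 / norm u^2 \<le> spec_norm (Theta_mat vh wh om t)^2"
proof -
  have "norm (Theta_mat vh wh om t *v u) / norm u \<le> spec_norm (Theta_mat vh wh om t)"
    unfolding spec_norm_def by (rule le_onorm) simp
  then have "(norm (Theta_mat vh wh om t *v u) / norm u)^2 \<le> spec_norm (Theta_mat vh wh om t)^2"
    by (rule power_mono) simp
  then show ?thesis by (simp add: power_divide)
qed

lemma N_lower1:
  assumes nv: "norm vh = 1" and nw: "norm wh = 1"
  shows "(1 + cmod (tdot wh))*(1 - cmod (tdot vh))/4 \<le> spec_norm (Theta_mat vh wh om t)^2"
proof -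
  obtain g where g: "cmod g = 1" "cnj g ^2 * tdot wh = of_real (cmod (tdot wh))"
    using exists_major_g by blast
  define u where "u = reV g (vcnj wh)"
  define K where "K = (1 + cmod (tdot wh))/2"
  define c where "c = rowmul wh u"
  have Kp: "K > 0" by (simp add: K_def add_pos_nonneg)
  have cu: "c = g * of_real K"
    unfolding c_def u_def K_def by (rule major_point(1)[OF nw g])
  have cK: "cmod c = K" using g(1) Kp by (simp add: cu norm_mult)
  have nu: "norm u^2 = K"
    unfolding u_def K_def by (rule major_point(2)[OF nw g])
  then have u0: "u \<noteq> 0" using Kp by auto
  define R where "R = Re (cis (2*(om*t)) * c^2 * tdot vh)"
  have h: "- (K^2 * cmod (tdot vh)) \<le> R"
  proof -
    have "\<bar>Re (cis (2*(om*t)) * c^2 * tdot vh)\<bar> \<le> cmod (cis (2*(om*t)) * c^2 * tdot vh)"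
      by (rule abs_Re_le_cmod)
    also have "\<dots> = K^2 * cmod (tdot vh)" by (simp add: norm_mult norm_power cK)
    finally show ?thesis unfolding R_def by linarith
  qed
  have "norm (Theta_mat vh wh om t *v u)^2 = (cmod c^2 + Re (cis (2*(om*t)) * c^2 * tdot vh))/2"
    unfolding c_def by (rule norm_Theta_mat[OF nv])
  also have "\<dots> = (K^2 + R)/2" unfolding cK R_def ..
  also have "\<dots> \<ge> K^2 * (1 - cmod (tdot vh))/2"
  proof -
    have "K^2 * (1 - cmod (tdot vh)) = K^2 - K^2 * cmod (tdot vh)" by (simp add: algebra_simps)
    then show ?thesis using h by argo
  qed
  finally have h2: "K^2 * (1 - cmod (tdot vh))/2 \<le> norm (Theta_mat vh wh om t *v u)^2" .
  have e1: "K^2 * (1 - cmod (tdot vh))/2 / K = K * (1 - cmod (tdot vh))/2"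
    using Kp by (simp add: power2_eq_square field_simps)
  have e2: "K * (1 - cmod (tdot vh))/2 = (1 + cmod (tdot wh))*(1 - cmod (tdot vh))/4"
    by (simp add: K_def field_simps)
  have "K^2 * (1 - cmod (tdot vh))/2 / K \<le> norm (Theta_mat vh wh om t *v u)^2 / norm u^2"
    unfolding nu using h2 Kp by (intro divide_right_mono) auto
  also have "\<dots> \<le> spec_norm (Theta_mat vh wh om t)^2" by (rule N_ge[OF u0])
  finally show ?thesis unfolding e1 e2 .
qed

lemma N_lower2:
  assumes nv: "norm vh = 1" and nw: "norm wh = 1" and W1: "cmod (tdot wh) < 1"
  shows "(1 + Re (cis (2*(om*t + gam)) * tdot vh))/2 * ((1 - cmod (tdot wh))/2)
     \<le> spec_norm (Theta_mat vh wh om t)^2"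
proof -
  obtain u where u: "u \<noteq> 0" "rowmul wh u = cis gam" "norm u^2 \<le> 2 / (1 - cmod (tdot wh))"
    using dir_point[OF nw W1, of "cis gam"] by auto
  define D2 where "D2 = (1 + Re (cis (2*(om*t + gam)) * tdot vh))/2"
  have D2n: "0 \<le> D2"
  proof -
    have "\<bar>Re (cis (2*(om*t + gam)) * tdot vh)\<bar> \<le> cmod (cis (2*(om*t + gam)) * tdot vh)"
      by (rule abs_Re_le_cmod)
    also have "\<dots> \<le> 1" using tdot_le1[of vh] nv by (simp add: norm_mult)
    finally show ?thesis by (simp add: D2_def)
  qed
  have "norm (Theta_mat vh wh om t *v u)^2 = (cmod (cis gam)^2 + Re (cis (2*(om*t)) * (cis gam)^2 * tdot vh))/2"
    using norm_Theta_mat[OF nv, of wh om t u] u(2) by simp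
  also have "\<dots> = D2" by (simp add: D2_def cis_pow2 cis_mult algebra_simps)
  finally have nt: "norm (Theta_mat vh wh om t *v u)^2 = D2" .
  have up: "0 < norm u^2" using u(1) by simp
  have "D2 * ((1 - cmod (tdot wh))/2) = D2 / (2 / (1 - cmod (tdot wh)))" by simp
  also have "\<dots> \<le> D2 / norm u^2"
  proof -
    have "0 < 2 / (1 - cmod (tdot wh))" using W1 by simp
    then show ?thesis using u(3) up D2n by (intro divide_left_mono) (auto intro: mult_pos_pos)
  qed
  also have "\<dots> \<le> spec_norm (Theta_mat vh wh om t)^2" using N_ge[OF u(1), of vh wh om t] nt by simp
  finally show ?thesis by (simp add: D2_def)
qed



lemma F_part2:
  assumes nv: "norm vh = 1" and nw: "norm wh = 1"
    and tau: "cnj (cis th)^2 * tdot wh = of_real (cmod (tdot wh))"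
    and W1: "cmod (tdot wh) < 1" and V1: "cmod (tdot vh) < 1"
    and ps: "cis (2*(om*t)) * cis (2*th) * tdot vh = - of_real (cmod (tdot vh))"
  shows "spec_norm (Theta_mat vh wh om t) \<le> sqrt (max ((1 - cmod (tdot vh))*(1 + cmod (tdot wh))/2) ((1 + cmod (tdot vh))*(1 - cmod (tdot wh))/2) / 2)"
  unfolding spec_norm_def
proof (rule onorm_le)
  fix u
  define V where "V = cmod (tdot vh)"
  define Mx where "Mx = max ((1 - V)*(1 + cmod (tdot wh))/2) ((1 + V)*(1 - cmod (tdot wh))/2)"
  define c where "c = rowmul wh u"
  define d where "d = cis (-th) * c"
  have cd: "c = cis th * d" unfolding d_def by (simp add: mult.assoc[symmetric] cis_mult)
  have e1: "norm (Theta_mat vh wh om t *v u)^2 = (cmod c^2 + Re (cis (2*(om*t)) * c^2 * tdot vh))/2"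
    unfolding c_def by (rule norm_Theta_mat[OF nv])
  have e2: "cis (2*(om*t)) * c^2 * tdot vh = (cis (2*(om*t)) * cis (2*th) * tdot vh) * d^2"
    unfolding cd by (simp add: power_mult_distrib cis_pow2 mult_ac)
  have e3: "cis (2*(om*t)) * c^2 * tdot vh = - of_real V * d^2" unfolding e2 ps V_def by simp
  have e4: "cmod c = cmod d" by (simp add: cd norm_mult)
  have e5: "(cmod d^2 + Re (- of_real V * d^2))/2 = ((1-V) * (Re d)^2 + (1+V) * (Im d)^2)/2"
  proof -
    have "cmod d^2 = (Re d)^2 + (Im d)^2" by (rule cmod_power2)
    then show ?thesis by (simp add: power2_eq_square field_simps)
  qed
  have e6: "(1-V) * (Re d)^2 + (1+V) * (Im d)^2 \<le> Mx * norm u^2"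
    unfolding d_def c_def Mx_def V_def
    by (rule ellipse_bound[OF nw tau W1]) (use V1 in auto)
  have "norm (Theta_mat vh wh om t *v u)^2 \<le> Mx / 2 * norm u^2"
    unfolding e1 e3 e4 e5 using e6 by simp
  then show "norm (Theta_mat vh wh om t *v u) \<le> sqrt (max ((1 - cmod (tdot vh))*(1 + cmod (tdot wh))/2) ((1 + cmod (tdot vh))*(1 - cmod (tdot wh))/2) / 2) * norm u"
    unfolding Mx_def V_def by (rule le_sqrt_mult) simp
qed

lemma N_part2_max:
  assumes nv: "norm vh = 1" and nw: "norm wh = 1"
    and tau: "cnj (cis th)^2 * tdot wh = of_real (cmod (tdot wh))"
    and ps: "cis (2*(om*t)) * cis (2*th) * tdot vh = of_real (cmod (tdot vh))"
  shows "(1 + cmod (tdot wh))*(1 + cmod (tdot vh))/4 \<le> spec_norm (Theta_mat vh wh om t)^2"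
proof -
  define V where "V = cmod (tdot vh)"
  define K where "K = (1 + cmod (tdot wh))/2"
  define u where "u = reV (cis th) (vcnj wh)"
  define c where "c = rowmul wh u"
  have Kp: "K > 0" by (simp add: K_def add_pos_nonneg)
  have g1: "cmod (cis th) = 1" by simp
  have cu: "c = cis th * of_real K"
    unfolding c_def u_def K_def by (rule major_point(1)[OF nw g1 tau])
  have nu: "norm u^2 = K"
    unfolding u_def K_def by (rule major_point(2)[OF nw g1 tau])
  then have u0: "u \<noteq> 0" using Kp by auto
  have e1: "norm (Theta_mat vh wh om t *v u)^2 = (cmod c^2 + Re (cis (2*(om*t)) * c^2 * tdot vh))/2"
    unfolding c_def by (rule norm_Theta_mat[OF nv])
  have e2: "cis (2*(om*t)) * c^2 * tdot vh = (cis (2*(om*t)) * cis (2*th) * tdot vh) * of_real (K^2)"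
    unfolding cu by (simp add: power_mult_distrib cis_pow2 mult_ac)
  have e3: "Re (cis (2*(om*t)) * c^2 * tdot vh) = V * K^2" unfolding e2 ps V_def by simp
  have e4: "cmod c = K" using Kp by (simp add: cu norm_mult)
  have n2: "norm (Theta_mat vh wh om t *v u)^2 = K^2 * (1 + V)/2" unfolding e1 e3 e4 by (simp add: algebra_simps)
  have r: "norm (Theta_mat vh wh om t *v u)^2 / norm u^2 = K * (1 + V)/2"
    unfolding n2 nu using Kp by (simp add: power2_eq_square field_simps)
  from N_ge[OF u0, of vh wh om t] have "K * (1 + V)/2 \<le> spec_norm (Theta_mat vh wh om t)^2"
    unfolding r .
  then show ?thesis by (simp add: K_def V_def field_simps)
qed

lemma sqrt_le_of_sq: "0 \<le> (x::real) \<Longrightarrow> y \<le> x^2 \<Longrightarrow> sqrt y \<le> x"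
  by (metis real_sqrt_abs real_sqrt_le_mono abs_of_nonneg)

lemma core1:
  fixes N D V W :: real
  assumes V: "0 \<le> V" "V < 1" and W: "0 \<le> W" "W < 1" and N0: "0 \<le> N" and D0: "D > 0"
    and D2u: "D^2 \<le> (1+V)/2" and D2l: "(1-V)/2 \<le> D^2"
    and Nu: "N \<le> sqrt ((1+W)*(1+V)/4)" and Nl: "(1+W)*(1-V)/4 \<le> N^2"
    and N2: "W \<le> V \<Longrightarrow> D^2*((1-W)/2) \<le> N^2"
  shows "a_min V W \<le> N/D \<and> N/D \<le> a_max V W"
proof
  have q: "(N/D)^2 = N^2/D^2" by (simp add: power_divide)
  have ND0: "0 \<le> N/D" using N0 D0 by simp
  have D2p: "0 < D^2" using D0 by simp
  have Nu2: "N^2 \<le> (1+W)*(1+V)/4"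
  proof -
    have "N^2 \<le> (sqrt ((1+W)*(1+V)/4))^2" using Nu N0 by (rule power_mono)
    also have "\<dots> = (1+W)*(1+V)/4" using V W by simp
    finally show ?thesis .
  qed
  have "N^2/D^2 \<le> ((1+W)*(1+V)/4) / ((1-V)/2)"
    using Nu2 D2l V W by (intro frac_le) auto
  also have "\<dots> = (1+W)*(1+V)/(2*(1-V))" using V by (simp add: field_simps)
  finally show "N/D \<le> a_max V W"
    unfolding a_max_def q[symmetric] by (rule real_le_rsqrt)
  show "a_min V W \<le> N/D"
  proof (cases "V \<le> W")
    case True
    have "(1+W)*(1-V)/(2*(1+V)) = ((1+W)*(1-V)/4) / ((1+V)/2)" using V by (simp add: field_simps)
    also have "\<dots> \<le> N^2/D^2" using Nl D2u D2p V W by (intro frac_le) auto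
    finally show ?thesis unfolding a_min_def using True ND0 q by (simp add: sqrt_le_of_sq)
  next
    case False
    have "(1-W)/2 \<le> N^2/D^2" using N2 False D2p by (simp add: pos_le_divide_eq mult.commute)
    then show ?thesis unfolding a_min_def using False ND0 q by (simp add: sqrt_le_of_sq)
  qed
qed

lemma core_min:
  fixes N D V W :: real
  assumes V: "0 \<le> V" "V < 1" and W: "0 \<le> W" "W < 1" and N0: "0 \<le> N" and D0: "D > 0"
    and D2: "D^2 = (1+V)/2"
    and Nu: "N \<le> sqrt (max ((1-V)*(1+W)/2) ((1+V)*(1-W)/2) / 2)"
  shows "N/D \<le> a_min V W"
proof -
  define Mx where "Mx = max ((1-V)*(1+W)/2) ((1+V)*(1-W)/2)"
  have Mx0: "0 \<le> Mx" using V W by (simp add: Mx_def le_max_iff_disj)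
  have Nu2: "N^2 \<le> Mx/2"
  proof -
    have "N^2 \<le> (sqrt (Mx/2))^2" using Nu N0 unfolding Mx_def by (intro power_mono) auto
    also have "\<dots> = Mx/2" using Mx0 by simp
    finally show ?thesis .
  qed
  have q: "(N/D)^2 = N^2/D^2" by (simp add: power_divide)
  have "(N/D)^2 \<le> (Mx/2) / ((1+V)/2)" unfolding q D2 using Nu2 V by (intro divide_right_mono) auto
  also have "\<dots> = Mx / (1+V)" using V by (simp add: field_simps)
  finally have h: "(N/D)^2 \<le> Mx / (1+V)" .
  show ?thesis
  proof (cases "V \<le> W")
    case True
    have "(1+V)*(1-W) \<le> (1-V)*(1+W)" using True by (simp add: algebra_simps)
    then have MxE: "Mx = (1-V)*(1+W)/2" by (simp add: Mx_def max_def)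
    have MV: "Mx/(1+V) = (1+W)*(1-V)/(2*(1+V))" unfolding MxE using V by (simp add: field_simps)
    have "(N/D)^2 \<le> (1+W)*(1-V)/(2*(1+V))" using h unfolding MV .
    then show ?thesis unfolding a_min_def using True by (simp add: real_le_rsqrt)
  next
    case False
    have "(1-V)*(1+W) \<le> (1+V)*(1-W)" using False by (simp add: algebra_simps)
    then have MxE: "Mx = (1+V)*(1-W)/2" by (simp add: Mx_def max_def)
    have MV: "Mx/(1+V) = (1-W)/2" unfolding MxE using V by (simp add: field_simps)
    have "(N/D)^2 \<le> (1-W)/2" using h unfolding MV .
    then show ?thesis unfolding a_min_def using False by (simp add: real_le_rsqrt)
  qed
qed

lemma core_max:
  fixes N D V W :: real
  assumes V: "0 \<le> V" "V < 1" and W: "0 \<le> W" and N0: "0 \<le> N" and D0: "D > 0"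
    and D2: "D^2 = (1-V)/2"
    and Nl: "(1+W)*(1+V)/4 \<le> N^2"
  shows "a_max V W \<le> N/D"
proof -
  have q: "(N/D)^2 = N^2/D^2" by (simp add: power_divide)
  have "(1+W)*(1+V)/(2*(1-V)) = ((1+W)*(1+V)/4) / ((1-V)/2)" using V by (simp add: field_simps)
  also have "\<dots> \<le> (N/D)^2" unfolding q D2 using Nl V by (intro divide_right_mono) auto
  finally show ?thesis unfolding a_max_def using N0 D0 by (intro sqrt_le_of_sq) auto
qed

lemma cis_odd: "cis ((2 * of_int k + 1) * pi) = -1"
proof -
  have "(2 * of_int k + 1) * pi = 2 * pi * of_int k + pi" by (simp add: algebra_simps)
  then have "cis ((2 * of_int k + 1) * pi) = cis (2 * pi * of_int k) * cis pi"
    by (simp only: cis_mult)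
  also have "cis (2 * pi * of_int k) = 1" by (rule cis_multiple_2pi) simp
  finally show ?thesis by simp
qed



lemma D2_bounds:
  assumes "norm vh = 1"
  shows "(1 - cmod (tdot vh))/2 \<le> (1 + Re (cis a * tdot vh))/2 \<and> (1 + Re (cis a * tdot vh))/2 \<le> (1 + cmod (tdot vh))/2"
  using Re_unit_bound[of "cis a" "tdot vh"] by simp

theorem theorem10:
  fixes A :: "real^'n^'n" and l1 :: complex and v w :: "complex^'n" and y0 :: "real^'n"
  assumes "Lambda1_complex A l1"
    and "v \<noteq> 0" and "cmat A *v v = l1 *s v"
    and "w \<noteq> 0" and "w v* cmat A = l1 *s w"
    and "rowmul w y0 \<noteq> 0"
  shows "(\<forall>t. a_min (cmod (tdot (nrmz v))) (cmod (tdot (nrmz w))) \<le> OT (nrmz v) (nrmz w) (Im l1) t y0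
             \<and> OT (nrmz v) (nrmz w) (Im l1) t y0 \<le> a_max (cmod (tdot (nrmz v))) (cmod (tdot (nrmz w))))
     \<and> (\<forall>\<theta>1. major_axis_angle (nrmz w) \<theta>1 \<and>
           (\<exists>k::int. Arg (rowmul (nrmz w) (nrmz y0)) - \<theta>1 = (2 * of_int k + 1) * (pi / 2)) \<longrightarrow>
           (\<exists>t. OT (nrmz v) (nrmz w) (Im l1) t y0 = a_min (cmod (tdot (nrmz v))) (cmod (tdot (nrmz w))))
         \<and> (\<exists>t. OT (nrmz v) (nrmz w) (Im l1) t y0 = a_max (cmod (tdot (nrmz v))) (cmod (tdot (nrmz w)))))"
proof -
  define vh where "vh = nrmz v"
  define wh where "wh = nrmz w"
  define om where "om = Im l1"
  define V where "V = cmod (tdot vh)"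
  define W where "W = cmod (tdot wh)"
  define y0h where "y0h = nrmz y0"
  define gam where "gam = Arg (rowmul wh y0h)"
  have om: "om > 0" using assms(1) by (simp add: Lambda1_complex_def om_def)
  have nv: "norm vh = 1" using assms(2) by (simp add: vh_def norm_nrmz)
  have nw: "norm wh = 1" using assms(4) by (simp add: wh_def norm_nrmz)
  have V1: "V < 1" unfolding V_def vh_def
    by (rule tdot_lt1[OF norm_nrmz[OF assms(2)] nrmz_eig[OF assms(3)]]) (use om in \<open>simp add: om_def\<close>)
  have W1: "W < 1" unfolding W_def wh_def
    by (rule tdot_lt1[OF norm_nrmz[OF assms(4)] nrmz_eig[OF left_eig[OF assms(5)]]]) (use om in \<open>simp add: om_def\<close>)
  have V0: "0 \<le> V" and W0: "0 \<le> W" by (simp_all add: V_def W_def)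
  define N where "N = (\<lambda>t. spec_norm (Theta_mat vh wh om t))"
  define D where "D = (\<lambda>t. norm (Theta_vec vh wh om t y0h))"
  have OTeq: "\<And>t. OT vh wh om t y0 = N t / D t" by (simp add: OT_def N_def D_def y0h_def)
  have D2: "\<And>t. (D t)^2 = (1 + Re (cis (2*(om*t + gam)) * tdot vh))/2"
    unfolding D_def gam_def by (rule norm_Theta_vec[OF nv])
  have D2b: "\<And>t. (1 - V)/2 \<le> (D t)^2 \<and> (D t)^2 \<le> (1 + V)/2"
    unfolding D2 V_def by (rule D2_bounds[OF nv])
  have Dpos: "\<And>t. D t > 0"
  proof -
    fix t
    have "0 < (D t)^2" using D2b[of t] V1 by argo
    moreover have "0 \<le> D t" by (simp add: D_def)
    ultimately show "D t > 0" by (metis less_eq_real_def power_zero_numeral zero_less_numeral)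
  qed
  have N0: "\<And>t. 0 \<le> N t" unfolding N_def spec_norm_def by (rule onorm_pos_le) simp
  have part1: "\<And>t. a_min V W \<le> OT vh wh om t y0 \<and> OT vh wh om t y0 \<le> a_max V W"
  proof -
    fix t
    show "a_min V W \<le> OT vh wh om t y0 \<and> OT vh wh om t y0 \<le> a_max V W"
      unfolding OTeq
    proof (rule core1[OF V0 V1 W0 W1 N0 Dpos])
      show "(D t)^2 \<le> (1+V)/2" "(1-V)/2 \<le> (D t)^2" using D2b[of t] by auto
      show "N t \<le> sqrt ((1+W)*(1+V)/4)" unfolding N_def W_def V_def by (rule N_upper[OF nv nw])
      show "(1+W)*(1-V)/4 \<le> (N t)^2" unfolding N_def W_def V_def by (rule N_lower1[OF nv nw])
      show "(D t)^2*((1-W)/2) \<le> (N t)^2" if "W \<le> V"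
        unfolding D2 N_def W_def by (rule N_lower2[OF nv nw W1[unfolded W_def]])
    qed
  qed
  have part2: "\<And>th. major_axis_angle wh th \<Longrightarrow> (\<exists>k::int. gam - th = (2 * of_int k + 1) * (pi / 2)) \<Longrightarrow>
      (\<exists>t. OT vh wh om t y0 = a_min V W) \<and> (\<exists>t. OT vh wh om t y0 = a_max V W)"
  proof -
    fix th
    assume ma: "major_axis_angle wh th" and "\<exists>k::int. gam - th = (2 * of_int k + 1) * (pi / 2)"
    then obtain k :: int where k: "gam - th = (2 * of_int k + 1) * (pi / 2)" by blast
    have tau: "cnj (cis th)^2 * tdot wh = of_real (cmod (tdot wh))" by (rule major_axis_tau[OF nw ma])
    have g2: "2 * gam = 2 * th + (2 * of_int k + 1) * pi" using k by (simp add: algebra_simps)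
    have cg: "cis (2*gam) = - cis (2*th)" unfolding g2 by (simp add: cis_mult[symmetric] cis_odd)
    have Dform: "\<And>t. (D t)^2 = (1 - Re (cis (2*(om*t)) * cis (2*th) * tdot vh))/2"
    proof -
      fix t
      have "cis (2*(om*t + gam)) = cis (2*(om*t)) * cis (2*gam)" by (simp add: cis_mult algebra_simps)
      then have "cis (2*(om*t + gam)) * tdot vh = - (cis (2*(om*t)) * cis (2*th) * tdot vh)"
        unfolding cg by simp
      then show "(D t)^2 = (1 - Re (cis (2*(om*t)) * cis (2*th) * tdot vh))/2" unfolding D2 by simp
    qed
    define dl where "dl = Arg (tdot vh)"
    have nu: "tdot vh = of_real V * cis dl" using rcis_cmod_Arg[of "tdot vh"] by (simp add: V_def dl_def rcis_def)
    have psi: "\<And>p. cis (2*(om*(p/om))) * cis (2*th) * tdot vh = of_real V * cis (2*p + 2*th + dl)"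
    proof -
      fix p
      have "om*(p/om) = p" using om by simp
      then have "cis (2*(om*(p/om))) * cis (2*th) * tdot vh = of_real V * (cis (2*p) * cis (2*th) * cis dl)"
        unfolding nu by (simp add: mult_ac)
      also have "cis (2*p) * cis (2*th) * cis dl = cis (2*p + 2*th + dl)" by (simp add: cis_mult)
      finally show "cis (2*(om*(p/om))) * cis (2*th) * tdot vh = of_real V * cis (2*p + 2*th + dl)" .
    qed
    define tmin where "tmin = ((pi - 2*th - dl)/2)/om"
    define tmax where "tmax = (- (2*th + dl)/2)/om"
    have pmin: "cis (2*(om*tmin)) * cis (2*th) * tdot vh = - of_real V"
    proof -
      have "2*((pi - 2*th - dl)/2) + 2*th + dl = pi" by (simp add: field_simps)
      then show ?thesis unfolding tmin_def psi by simp
    qed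
    have pmax: "cis (2*(om*tmax)) * cis (2*th) * tdot vh = of_real V"
    proof -
      have "2*(- (2*th + dl)/2) + 2*th + dl = 0" by (simp add: field_simps)
      then show ?thesis unfolding tmax_def psi by simp
    qed
    have "OT vh wh om tmin y0 \<le> a_min V W"
      unfolding OTeq
    proof (rule core_min[OF V0 V1 W0 W1 N0 Dpos])
      show "(D tmin)^2 = (1+V)/2" unfolding Dform pmin by simp
      show "N tmin \<le> sqrt (max ((1-V)*(1+W)/2) ((1+V)*(1-W)/2) / 2)"
        unfolding N_def V_def W_def
        by (rule F_part2[OF nv nw tau W1[unfolded W_def] V1[unfolded V_def] pmin[unfolded V_def]])
    qed
    moreover have "a_min V W \<le> OT vh wh om tmin y0" using part1 by blast
    ultimately have "OT vh wh om tmin y0 = a_min V W" by simp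
    moreover have "a_max V W \<le> OT vh wh om tmax y0"
      unfolding OTeq
    proof (rule core_max[OF V0 V1 W0 N0 Dpos])
      show "(D tmax)^2 = (1-V)/2" unfolding Dform pmax by simp
      show "(1+W)*(1+V)/4 \<le> (N tmax)^2"
        unfolding N_def V_def W_def by (rule N_part2_max[OF nv nw tau pmax[unfolded V_def]])
    qed
    moreover have "OT vh wh om tmax y0 \<le> a_max V W" using part1 by blast
    ultimately show "(\<exists>t. OT vh wh om t y0 = a_min V W) \<and> (\<exists>t. OT vh wh om t y0 = a_max V W)"
      by (metis antisym)
  qed
  show ?thesis
    using part1 part2 unfolding vh_def wh_def om_def V_def W_def gam_def y0h_def by blast
qed

end
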